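(* Let $G$ be a 0-1 strongly EFX-orientable graph. Then for every matching $M$ in $G$, the subgraph of $G$ induced by the set of vertices covered by $M$ contains an independent set of size $|M|$.
   Context: All graphs are finite and simple. For a graph $G=(V,E)$ and $v\in V$, $E(v)$ is the set of edges incident to $v$. A graphical instance on $G$ assigns to each vertex $v$ a valuation $f_v:2^E\to\mathbb{R}_{\ge 0}$ that is monotone and satisfies $f_v(X)=f_v(X\cap E(v))$ for all $X\subseteq E$. An orientation of $G$ chooses for each edge one of its endpoints as its head; vertex $v$ receives the bundle $X_v$ of edges whose head is $v$. The orientation is EFX if for all $u,v\in V$ and every $g\in X_v$, $f_u(X_u)\ge f_u(X_v\setminus\{g\})$. A graph $G$ is 0-1 strongly EFX-orientable if for every graphical instance on $G$ in which each $f_v$ is additive with $f_v(\{e\})\in\{0,1\}$ for all edges $e$, there exists an EFX orientation. *)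

theory Defs
  imports Main
begin

definition simple_graph :: "'v set \<Rightarrow> 'v set set \<Rightarrow> bool" where
  "simple_graph V E \<longleftrightarrow> finite V \<and> (\<forall>e\<in>E. e \<subseteq> V \<and> card e = 2)"

definition incident_edges :: "'v set set \<Rightarrow> 'v \<Rightarrow> 'v set set" where
  "incident_edges E v = {e \<in> E. v \<in> e}"

definition val01 :: "'v set set \<Rightarrow> ('v \<Rightarrow> 'v set \<Rightarrow> nat) \<Rightarrow> 'v \<Rightarrow> 'v set set \<Rightarrow> nat" where
  "val01 E w v X = (\<Sum>e\<in>X \<inter> incident_edges E v. w v e)"

(* An orientation assigns to each edge one of its endpoints as head. *)
definition is_orientation :: "'v set set \<Rightarrow> ('v set \<Rightarrow> 'v) \<Rightarrow> bool" where
  "is_orientation E h \<longleftrightarrow> (\<forall>e\<in>E. h e \<in> e)"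

definition bundle_of :: "'v set set \<Rightarrow> ('v set \<Rightarrow> 'v) \<Rightarrow> 'v \<Rightarrow> 'v set set" where
  "bundle_of E h v = {e \<in> E. h e = v}"

definition EFX_orientation ::
  "'v set \<Rightarrow> 'v set set \<Rightarrow> ('v \<Rightarrow> 'v set \<Rightarrow> nat) \<Rightarrow> ('v set \<Rightarrow> 'v) \<Rightarrow> bool" where
  "EFX_orientation V E w h \<longleftrightarrow> is_orientation E h \<and>
     (\<forall>u\<in>V. \<forall>v\<in>V. \<forall>g\<in>bundle_of E h v.
        val01 E w u (bundle_of E h u) \<ge> val01 E w u (bundle_of E h v - {g}))"

definition strongly_EFX_orientable_01 :: "'v set \<Rightarrow> 'v set set \<Rightarrow> bool" where
  "strongly_EFX_orientable_01 V E \<longleftrightarrow>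
     (\<forall>w :: 'v \<Rightarrow> 'v set \<Rightarrow> nat. (\<forall>v e. w v e \<le> 1) \<longrightarrow> (\<exists>h. EFX_orientation V E w h))"

definition matching :: "'v set set \<Rightarrow> 'v set set \<Rightarrow> bool" where
  "matching E M \<longleftrightarrow> M \<subseteq> E \<and> (\<forall>e\<in>M. \<forall>e'\<in>M. e \<noteq> e' \<longrightarrow> e \<inter> e' = {})"

definition independent_set :: "'v set set \<Rightarrow> 'v set \<Rightarrow> bool" where
  "independent_set E S \<longleftrightarrow> (\<forall>e\<in>E. \<not> e \<subseteq> S)"

end

theory Submission
  imports Defs
begin

theorem mainTheorem2:
  fixes V :: "'v set" and E :: "'v set set" and M :: "'v set set"
  assumes "simple_graph V E"
    and "strongly_EFX_orientable_01 V E"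
    and "matching E M"
  shows "\<exists>S. S \<subseteq> \<Union>M \<and> independent_set E S \<and> card S = card M"
proof -
  have finV: "finite V" and Esub: "\<And>e. e \<in> E \<Longrightarrow> e \<subseteq> V \<and> card e = 2"
    using assms(1) unfolding simple_graph_def by auto
  have finE: "finite E"
  proof -
    have "E \<subseteq> Pow V" using Esub by auto
    thus ?thesis using finV finite_subset by blast
  qed
  have ME: "M \<subseteq> E" and disj: "\<And>e e'. e \<in> M \<Longrightarrow> e' \<in> M \<Longrightarrow> e \<noteq> e' \<Longrightarrow> e \<inter> e' = {}"
    using assms(3) unfolding matching_def by auto
  define w :: "'v \<Rightarrow> 'v set \<Rightarrow> nat" where "w = (\<lambda>v e. if e \<in> M \<and> v \<in> e then 1 else 0)"
  have "\<forall>v e. w v e \<le> 1" unfolding w_def by auto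
  then obtain h where h: "EFX_orientation V E w h"
    using assms(2) unfolding strongly_EFX_orientable_01_def by blast
  have hor: "\<And>e. e \<in> E \<Longrightarrow> h e \<in> e" using h unfolding EFX_orientation_def is_orientation_def by auto
  have efx: "\<And>u v g. u \<in> V \<Longrightarrow> v \<in> V \<Longrightarrow> g \<in> bundle_of E h v \<Longrightarrow>
      val01 E w u (bundle_of E h u) \<ge> val01 E w u (bundle_of E h v - {g})"
    using h unfolding EFX_orientation_def by blast
  have bun: "bundle_of E h (h e) = {e}" if eM: "e \<in> M" for e
  proof
    have eE: "e \<in> E" using eM ME by auto
    then have he: "h e \<in> e" using hor by auto
    have "\<not> e \<subseteq> {h e}"
    proof
      assume "e \<subseteq> {h e}"
      then have "card e \<le> card {h e}" by (intro card_mono) auto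
      then show False using Esub[OF eE] by simp
    qed
    then obtain a where a: "a \<in> e" "a \<noteq> h e" by blast
    have aV: "a \<in> V" and hV: "h e \<in> V" using a he Esub[OF eE] by auto
    show "bundle_of E h (h e) \<subseteq> {e}"
    proof
      fix g assume g: "g \<in> bundle_of E h (h e)"
      show "g \<in> {e}"
      proof (rule ccontr)
        assume gne: "g \<notin> {e}"
        have 1: "val01 E w a (bundle_of E h a) = 0"
          unfolding val01_def
        proof (rule sum.neutral, rule ballI)
          fix e' assume e': "e' \<in> bundle_of E h a \<inter> incident_edges E a"
          show "w a e' = 0"
          proof (rule ccontr)
            assume "w a e' \<noteq> 0"
            then have "e' \<in> M" "a \<in> e'" unfolding w_def by (auto split: if_splits)
            then have "e' = e" using disj[OF \<open>e' \<in> M\<close> eM] a by blast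
            then show False using e' a unfolding bundle_of_def by auto
          qed
        qed
        have ein: "e \<in> (bundle_of E h (h e) - {g}) \<inter> incident_edges E a"
          using eE gne a unfolding bundle_of_def incident_edges_def by auto
        have fin: "finite ((bundle_of E h (h e) - {g}) \<inter> incident_edges E a)"
          using finE unfolding bundle_of_def by auto
        have "w a e \<le> val01 E w a (bundle_of E h (h e) - {g})"
          unfolding val01_def by (rule member_le_sum[OF ein _ fin]) auto
        moreover have "w a e = 1" using eM a unfolding w_def by auto
        ultimately show False using efx[OF aV hV g] 1 by simp
      qed
    qed
    show "{e} \<subseteq> bundle_of E h (h e)" using eE unfolding bundle_of_def by auto
  qed
  have inj: "inj_on h M"
  proof
    fix x y assume "x \<in> M" "y \<in> M" "h x = h y"
    then have "h x \<in> x \<inter> y" using hor ME by (metis IntI subsetD)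
    then show "x = y" using disj[OF \<open>x \<in> M\<close> \<open>y \<in> M\<close>] by blast
  qed
  show ?thesis
  proof (intro exI conjI)
    show "h ` M \<subseteq> \<Union>M" using hor ME by auto
    show "card (h ` M) = card M" using card_image[OF inj] .
    show "independent_set E (h ` M)" unfolding independent_set_def
    proof (intro ballI notI)
      fix f assume fE: "f \<in> E" and fS: "f \<subseteq> h ` M"
      have "card f = 2" using Esub[OF fE] by auto
      then obtain x y where f: "f = {x, y}" "x \<noteq> y" by (auto simp: card_2_iff)
      have "x \<in> h ` M" "y \<in> h ` M" using fS f by auto
      then obtain e1 where e1: "e1 \<in> M" "x = h e1" by blast
      obtain e2 where e2: "e2 \<in> M" "y = h e2" using \<open>y \<in> h ` M\<close> by blast
      have "e1 \<noteq> e2" using e1 e2 f by auto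
      then have d: "e1 \<inter> e2 = {}" using disj[OF e1(1) e2(1)] by blast
      have hx: "h e1 \<in> e1" "h e2 \<in> e2" using hor ME e1 e2 by auto
      have "h f \<in> f" using hor fE by auto
      then have "h f = x \<or> h f \<in> {y}" using f by auto
      then show False
      proof
        assume "h f = x"
        then have "f \<in> bundle_of E h (h e1)" using fE e1 unfolding bundle_of_def by auto
        then have "f = e1" using bun[OF e1(1)] by auto
        then show False using f e2 hx d by auto
      next
        assume "h f \<in> {y}"
        then have "f \<in> bundle_of E h (h e2)" using fE e2 unfolding bundle_of_def by auto
        then have "f = e2" using bun[OF e2(1)] by auto
        then show False using f e1 hx d by auto
      qed
    qed
  qed
qed

end
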